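(* Let $\xi>2$ and define $$\varepsilon_{min}(\xi)=\begin{cases}\infty,&\xi\le3,\\ \sqrt{(1-\tfrac2\xi)(1+\tfrac{1}{\xi-3})},&3<\xi<4,\\ 1,&\xi\ge4,\end{cases}\qquad \lambda_{max}(\varepsilon,\xi)=\xi\sqrt{\frac{\varepsilon^2}{1-\frac2\xi}-1}.$$ Then the set of pairs $(\varepsilon,\lambda)$ with $\varepsilon>1$ belonging to case (II) at position $\xi$ is exactly the set of pairs with $\varepsilon>\varepsilon_{min}(\xi)$ and $\lambda_c(\varepsilon)<\lambda<\lambda_{max}(\varepsilon,\xi)$.
   Context: Dimensionless potential: $U_\lambda(\xi)=(1-\tfrac2\xi)(1+\tfrac{\lambda^2}{\xi^2})$. For $\lambda^2>12$, $U_\lambda$ on $(2,\infty)$ has a local maximum at $\xi_{max}(\lambda)=\tfrac{\lambda^2}{2}(1-\sqrt{1-12/\lambda^2})$. For $\varepsilon>1$, $\lambda_c(\varepsilon)$ is the value of $\lambda$ for which the maximum of $U_\lambda$ equals $\varepsilon^2$; explicitly $\lambda_c(\varepsilon)^2=12/(1-4\alpha-8\alpha^2+8\alpha\sqrt{\alpha^2+\alpha})$, $\alpha=\tfrac98\varepsilon^2-1$ (so $\lambda_c(\varepsilon)>4$ for $\varepsilon>1$). A pair $(\varepsilon,\lambda)$ with $\varepsilon>1$ belongs to case (II) (scattered particles incoming from infinity) at position $\xi$ if $\lambda>\lambda_c(\varepsilon)$, $\xi>\xi_{max}(\lambda)$ and $U_\lambda(\xi)<\varepsilon^2$. *)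

theory Defs
  imports Complex_Main "HOL-Library.Extended_Real"
begin

definition U :: "real \<Rightarrow> real \<Rightarrow> real" where
  "U lam xi = (1 - 2 / xi) * (1 + lam^2 / xi^2)"

definition xi_max :: "real \<Rightarrow> real" where
  "xi_max lam = lam^2 / 2 * (1 - sqrt (1 - 12 / lam^2))"

definition alpha :: "real \<Rightarrow> real" where
  "alpha eps = 9/8 * eps^2 - 1"

definition lambda_c :: "real \<Rightarrow> real" where
  "lambda_c eps = sqrt (12 / (1 - 4 * alpha eps - 8 * (alpha eps)^2
                          + 8 * alpha eps * sqrt ((alpha eps)^2 + alpha eps)))"

definition case_II :: "real \<Rightarrow> real \<Rightarrow> real \<Rightarrow> bool" where
  "case_II eps lam xi \<longleftrightarrow> eps > 1 \<and> lam > lambda_c eps \<and> xi > xi_max lam \<and> U lam xi < eps^2"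

definition eps_min :: "real \<Rightarrow> ereal" where
  "eps_min xi = (if xi \<le> 3 then \<infinity>
                 else if xi < 4 then ereal (sqrt ((1 - 2/xi) * (1 + 1/(xi - 3))))
                 else 1)"

definition lambda_max :: "real \<Rightarrow> real \<Rightarrow> real" where
  "lambda_max eps xi = xi * sqrt (eps^2 / (1 - 2/xi) - 1)"

end

theory Submission
  imports Defs
begin

lemma alpha_facts:
  fixes eps :: real
  assumes "eps > 1"
  defines "a \<equiv> alpha eps"
  defines "r \<equiv> sqrt (a^2 + a)"
  defines "u0 \<equiv> 2*a + 1 - 2*r"
  shows "a > 1/8" "r^2 = a^2 + a" "a < r" "r < a + 1/2" "0 < u0" "u0 < 1"
        "1 - 4*a - 8*a^2 + 8*a*r = u0*(2-u0)"
        "u0^2 - (4*a+2)*u0 + 1 = 0"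
        "9 * eps^2 = 8*(a+1)"
proof -
  have e2: "eps^2 > 1" using assms(1) by (simp add: one_less_power)
  show a8: "a > 1/8" unfolding a_def alpha_def using e2 by simp
  show r2: "r^2 = a^2 + a" proof - have "0 \<le> a^2 + a" using a8 by (simp add: add_nonneg_nonneg) thus ?thesis unfolding r_def by simp qed
  have r0: "r \<ge> 0" unfolding r_def using a8 by (simp add: add_nonneg_nonneg)
  show ar: "a < r"
  proof -
    have "a^2 < r^2" using r2 a8 by simp
    thus ?thesis using r0 by (rule power_less_imp_less_base)
  qed
  show "r < a + 1/2"
  proof -
    have "r^2 < (a+1/2)^2" using r2 by (simp add: power2_eq_square algebra_simps)
    thus ?thesis by (rule power_less_imp_less_base) (use a8 in simp)
  qed
  then show "0 < u0" unfolding u0_def by simp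
  show "u0 < 1" unfolding u0_def using ar by simp
  show "1 - 4*a - 8*a^2 + 8*a*r = u0*(2-u0)" unfolding u0_def using r2
    by (simp add: power2_eq_square algebra_simps)
  show "u0^2 - (4*a+2)*u0 + 1 = 0" unfolding u0_def using r2
    by (simp add: power2_eq_square algebra_simps)
  show "9 * eps^2 = 8*(a+1)" unfolding a_def alpha_def by simp
qed

lemma keyL2:
  fixes eps lam :: real
  assumes e1: "eps > 1" and lc: "lam > lambda_c eps"
  defines "s \<equiv> sqrt (1 - 12/lam^2)"
  shows "lam > 0" "lam^2 > 12" "0 \<le> s" "s < 1" "2*(2-s)^2/(9*(1-s)) > eps^2"
proof -
  define a where "a = alpha eps"
  define r where "r = sqrt (a^2 + a)"
  define u0 where "u0 = 2*a + 1 - 2*r"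
  note F = alpha_facts[OF e1, folded a_def, folded r_def, folded u0_def]
  define D where "D = u0*(2-u0)"
  have D0: "0 < D" unfolding D_def using F by simp
  have "D = 1 - (1-u0)^2" unfolding D_def by (simp add: power2_eq_square algebra_simps)
  moreover have "(1-u0)^2 > 0" using F(6) by simp
  ultimately have D1: "D < 1" by simp
  have lcD: "lambda_c eps = sqrt (12/D)" unfolding lambda_c_def D_def
    using F(7) by (simp add: a_def[symmetric] r_def[symmetric])
  have lc0: "lambda_c eps > 0" using lcD D0 by simp
  show l0: "lam > 0" using lc0 lc by simp
  have "sqrt (12/D) < sqrt (lam^2)" using lc lcD l0 by simp
  hence l2D: "lam^2 > 12/D" by (simp only: real_sqrt_less_iff)
  have "12/D > 12" using D0 D1 by (simp add: less_divide_eq)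
  thus l12: "lam^2 > 12" using l2D by simp
  have "12 < lam^2 * D" using l2D D0 by (simp add: pos_divide_less_eq)
  hence q: "12/lam^2 < D" using l0 by (simp add: pos_divide_less_eq mult.commute)
  have arg0: "0 \<le> 1 - 12/lam^2" using l12 by (simp add: divide_le_eq)
  show s0: "0 \<le> s" unfolding s_def using arg0 by simp
  have s2: "s^2 = 1 - 12/lam^2" unfolding s_def using arg0 by simp
  have "12/lam^2 > 0" using l0 by simp
  hence "s^2 < 1" using s2 by simp
  hence "s^2 < 1^2" by simp
  thus s1: "s < 1" using power_less_imp_less_base by fastforce
  have "s^2 > (1-u0)^2" using s2 q unfolding D_def by (simp add: power2_eq_square algebra_simps)
  hence su: "s > 1 - u0" using s0 by (rule power_less_imp_less_base)
  define u where "u = 1 - s"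
  have u0p: "0 < u" "u < u0" using s1 su unfolding u_def by auto
  define u1 where "u1 = 2*a+1+2*r"
  have "u0 < u1" unfolding u0_def u1_def using F by simp
  have fac: "u^2 - (4*a+2)*u + 1 = (u-u0)*(u-u1)" unfolding u0_def u1_def using F(2)
    by (simp add: power2_eq_square algebra_simps)
  have "(u-u0)*(u-u1) > 0" using u0p \<open>u0 < u1\<close> by (simp add: mult_neg_neg)
  hence "2*(1+u)^2 > 8*(a+1)*u" using fac by (simp add: power2_eq_square algebra_simps)
  hence "2*(2-s)^2 > 9*eps^2*(1-s)" using F(9) unfolding u_def by (simp add: algebra_simps)
  thus "2*(2-s)^2/(9*(1-s)) > eps^2" using s1 by (simp add: pos_less_divide_eq algebra_simps)
qed

lemma xi_max_eq:
  fixes lam :: real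
  assumes l12: "lam^2 > 12"
  defines "s \<equiv> sqrt (1 - 12/lam^2)"
  shows "xi_max lam = 6/(1+s)" "0 \<le> s" "s < 1" "s^2 = 1 - 12/lam^2"
proof -
  have arg0: "0 \<le> 1 - 12/lam^2" using l12 by (simp add: divide_le_eq)
  show s0: "0 \<le> s" unfolding s_def using arg0 by simp
  show s2: "s^2 = 1 - 12/lam^2" unfolding s_def using arg0 by simp
  have ln: "lam \<noteq> 0"
  proof
    assume "lam = 0" with l12 show False by simp
  qed
  have "12/lam^2 > 0" using ln by simp
  hence "s^2 < 1^2" using s2 by simp
  thus s1: "s < 1" using power_less_imp_less_base s0 by fastforce
  have l0: "lam^2 \<noteq> 0" using ln by simp
  have "lam^2 * (1-s) * (1+s) = lam^2 * (1 - s^2)" by (simp add: power2_eq_square algebra_simps)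
  also have "\<dots> = 12" using s2 l0 by simp
  finally have e: "lam^2 * (1-s) * (1+s) = 12" .
  have "xi_max lam = lam^2/2 * (1-s)" unfolding xi_max_def s_def ..
  also have "\<dots> = 6/(1+s)" using e s0 by (simp add: field_simps)
  finally show "xi_max lam = 6/(1+s)" .
qed

lemma xi_max_bounds:
  fixes lam :: real
  assumes l12: "lam^2 > 12"
  shows "3 < xi_max lam" "xi_max lam \<le> 6"
proof -
  define s where "s = sqrt (1 - 12/lam^2)"
  note X = xi_max_eq[OF l12, folded s_def]
  show "3 < xi_max lam" unfolding X(1) using X(2,3) by (simp add: field_simps)
  show "xi_max lam \<le> 6" unfolding X(1) using X(2,3) by (simp add: field_simps)
qed

lemma xi_max_crit:
  fixes lam xi :: real
  assumes l12: "lam^2 > 12" and x0: "0 < xi" and x6: "xi \<le> 6"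
  shows "xi > xi_max lam \<longleftrightarrow> lam^2 * (xi - 3) > xi^2"
proof -
  define s where "s = sqrt (1 - 12/lam^2)"
  note X = xi_max_eq[OF l12, folded s_def]
  have "xi > xi_max lam \<longleftrightarrow> xi*(1+s) > 6" using X(1,2) by (simp add: divide_less_eq)
  also have "\<dots> \<longleftrightarrow> xi*s > 6 - xi" by (simp add: algebra_simps)
  also have "\<dots> \<longleftrightarrow> (xi*s)^2 > (6-xi)^2"
  proof
    assume "xi*s > 6 - xi" thus "(xi*s)^2 > (6-xi)^2" using x6 by (simp add: power_strict_mono)
  next
    assume "(xi*s)^2 > (6-xi)^2" thus "xi*s > 6 - xi"
      by (rule power_less_imp_less_base) (use x0 X(2) in simp)
  qed
  also have "\<dots> \<longleftrightarrow> xi^2 * (1 - 12/lam^2) > (6-xi)^2" using X(4) by (simp add: power_mult_distrib)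
  also have "\<dots> \<longleftrightarrow> lam^2 * (xi - 3) > xi^2"
  proof -
    have lp: "lam^2 > 0" using l12 by linarith
    have "xi^2 * (1 - 12/lam^2) = xi^2 - 12*xi^2/lam^2" by (simp add: algebra_simps)
    moreover have "(6-xi)^2 = 36 - 12*xi + xi^2" by (simp add: power2_eq_square algebra_simps)
    ultimately have "xi^2 * (1 - 12/lam^2) > (6-xi)^2 \<longleftrightarrow> 12*xi^2/lam^2 < 12*xi - 36" by auto
    also have "\<dots> \<longleftrightarrow> 12*xi^2 < (12*xi - 36)*lam^2" using lp by (simp add: divide_less_eq)
    also have "\<dots> \<longleftrightarrow> 12*xi^2 < 12*(lam^2 * (xi - 3))"
      by (simp add: algebra_simps)
    also have "\<dots> \<longleftrightarrow> lam^2 * (xi - 3) > xi^2" by simp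
    finally show ?thesis .
  qed
  finally show ?thesis .
qed

lemma U_at_max:
  fixes lam :: real
  assumes l12: "lam^2 > 12"
  defines "s \<equiv> sqrt (1 - 12/lam^2)"
  shows "U lam (xi_max lam) = 2*(2-s)^2/(9*(1-s))"
proof -
  note X = xi_max_eq[OF l12, folded s_def]
  have lp: "lam^2 > 0" using l12 by linarith
  have "lam^2 * (1 - s^2) = lam^2 * (12/lam^2)" using X(4) by simp
  also have "\<dots> = 12" using lp by simp
  finally have "lam^2 * (1 - s^2) = 12" .
  moreover have "(1-s)*(1+s) = 1 - s^2" by (simp add: power2_eq_square algebra_simps)
  moreover have "(1-s)*(1+s) \<noteq> 0" using X(2,3) by simp
  ultimately have l2: "lam^2 = 12/((1-s)*(1+s))" by (simp add: eq_divide_eq)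
  have p1: "1 - 2/(6/(1+s)) = (2-s)/3" by (simp add: field_simps)
  have nz: "1-s \<noteq> 0" "1+s \<noteq> 0" using X(2,3) by auto
  have "lam^2/(6/(1+s))^2 = (12/((1-s)*(1+s))) / (36/(1+s)^2)" unfolding l2 by (simp add: power_divide)
  also have "\<dots> = (1+s)/(3*(1-s))" using nz
    apply (simp add: divide_simps power2_eq_square)
    apply (simp add: algebra_simps)
    done
  finally have p2: "lam^2/(6/(1+s))^2 = (1+s)/(3*(1-s))" .
  have "U lam (xi_max lam) = (2-s)/3 * (1 + (1+s)/(3*(1-s)))" unfolding U_def X(1) p1 p2 ..
  also have "\<dots> = 2*(2-s)^2/(9*(1-s))" using X(2,3) by (simp add: field_simps power2_eq_square)
  finally show ?thesis .
qed

lemma U_mu: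
  fixes mu xi :: real
  assumes x3: "xi > 3" and x6: "xi \<le> 6" and m2: "mu^2 = xi^2/(xi-3)"
  shows "U mu (xi_max mu) = (1 - 2/xi)*(1 + 1/(xi-3))"
proof -
  have "12/mu^2 = 12*(xi-3)/xi^2" using m2 x3 by simp
  hence "1 - 12/mu^2 = ((6-xi)/xi)^2" using x3
    by (simp add: field_simps power2_eq_square)
  hence "sqrt (1 - 12/mu^2) = (6-xi)/xi" using x3 x6 by simp
  hence "xi_max mu = mu^2/2*(1 - (6-xi)/xi)" unfolding xi_max_def by simp
  also have "\<dots> = xi" using m2 x3 by (simp add: field_simps power2_eq_square)
  finally have "xi_max mu = xi" .
  thus ?thesis unfolding U_def m2 using x3 by (simp add: field_simps power2_eq_square)
qed

lemma U_lmax: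
  fixes eps lam xi :: real
  assumes x2: "xi > 2" and e1: "eps > 1" and l0: "lam > 0"
  shows "U lam xi < eps^2 \<longleftrightarrow> lam < lambda_max eps xi"
proof -
  define c where "c = 1 - 2/xi"
  have c0: "0 < c" "c < 1" unfolding c_def using x2 by (auto simp: field_simps)
  define K where "K = eps^2/c - 1"
  have e2: "eps^2 > 1" using e1 by (simp add: one_less_power)
  have "eps^2/c > 1" using c0 e2 by (simp add: less_divide_eq)
  hence K0: "K > 0" unfolding K_def by simp
  have q0: "lam/xi > 0" using l0 x2 by simp
  have "U lam xi < eps^2 \<longleftrightarrow> c * (1 + lam^2/xi^2) < eps^2" unfolding U_def c_def ..
  also have "\<dots> \<longleftrightarrow> 1 + lam^2/xi^2 < eps^2/c" using c0 by (simp add: less_divide_eq mult.commute)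
  also have "\<dots> \<longleftrightarrow> (lam/xi)^2 < K" unfolding K_def power_divide by linarith
  also have "\<dots> \<longleftrightarrow> sqrt ((lam/xi)^2) < sqrt K" by (simp only: real_sqrt_less_iff)
  also have "\<dots> \<longleftrightarrow> lam/xi < sqrt K" using l0 x2 by simp
  also have "\<dots> \<longleftrightarrow> lam < xi * sqrt K" using x2 by (simp add: divide_less_eq mult.commute)
  also have "\<dots> \<longleftrightarrow> lam < lambda_max eps xi" unfolding lambda_max_def K_def c_def ..
  finally show ?thesis .
qed

lemma eps_min_mid:
  fixes eps xi :: real
  assumes e1: "eps > 1" and x3: "3 < xi" "xi < 4"
  shows "ereal eps > eps_min xi \<longleftrightarrow> eps^2 > (1 - 2/xi)*(1 + 1/(xi-3))"
proof -
  have "eps_min xi = ereal (sqrt ((1 - 2/xi)*(1 + 1/(xi-3))))" unfolding eps_min_def using x3 by simp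
  hence "ereal eps > eps_min xi \<longleftrightarrow> sqrt ((1 - 2/xi)*(1 + 1/(xi-3))) < sqrt (eps^2)"
    using e1 by simp
  thus ?thesis by (simp only: real_sqrt_less_iff)
qed

lemma E_le1:
  fixes xi :: real
  assumes x4: "xi \<ge> 4"
  shows "(1 - 2/xi)*(1 + 1/(xi-3)) \<le> 1"
proof -
  have "(1 - 2/xi)*(1 + 1/(xi-3)) = (xi-2)^2/(xi*(xi-3))" using x4
    by (simp add: field_simps power2_eq_square)
  also have "\<dots> \<le> 1" using x4 by (simp add: divide_le_eq power2_eq_square algebra_simps)
  finally show ?thesis .
qed

lemma dir1:
  fixes eps lam xi :: real
  assumes x2: "xi > 2" and e1: "eps > 1" and H: "case_II eps lam xi"
  shows "ereal eps > eps_min xi" "lam < lambda_max eps xi"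
proof -
  have lc: "lam > lambda_c eps" and xm: "xi > xi_max lam" and Ul: "U lam xi < eps^2"
    using H unfolding case_II_def by auto
  note K = keyL2[OF e1 lc]
  show "lam < lambda_max eps xi" using U_lmax[OF x2 e1 K(1)] Ul by simp
  have x3: "xi > 3" using xi_max_bounds[OF K(2)] xm by simp
  show "ereal eps > eps_min xi"
  proof (cases "xi < 4")
    case False
    then show ?thesis unfolding eps_min_def using x3 e1 by simp
  next
    case True
    have "lam^2 * (xi - 3) > xi^2" using xi_max_crit[OF K(2)] x3 True xm by simp
    hence "1/(xi-3) < lam^2/xi^2" using x3
      by (simp add: divide_less_eq less_divide_eq mult.commute)
    moreover have "0 < 1 - 2/xi" using x2 by (simp add: field_simps)
    ultimately have "(1 - 2/xi)*(1 + 1/(xi-3)) < U lam xi" unfolding U_def by simp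
    with Ul show ?thesis using eps_min_mid[OF e1 x3 True] by simp
  qed
qed

lemma dir2:
  fixes eps lam xi :: real
  assumes x2: "xi > 2" and e1: "eps > 1" and em: "ereal eps > eps_min xi"
    and lc: "lambda_c eps < lam" and lm: "lam < lambda_max eps xi"
  shows "case_II eps lam xi"
proof -
  note K = keyL2[OF e1 lc]
  have Ul: "U lam xi < eps^2" using U_lmax[OF x2 e1 K(1)] lm by simp
  have x3: "xi > 3"
  proof (rule ccontr)
    assume "\<not> xi > 3" hence "eps_min xi = \<infinity>" unfolding eps_min_def by simp
    with em show False by simp
  qed
  have xm: "xi > xi_max lam"
  proof (cases "xi > 6")
    case True thus ?thesis using xi_max_bounds[OF K(2)] by simp
  next
    case False
    hence x6: "xi \<le> 6" by simp
    show ?thesis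
    proof (rule ccontr)
      assume "\<not> xi > xi_max lam"
      hence le: "lam^2 * (xi - 3) \<le> xi^2" using xi_max_crit[OF K(2)] x3 x6 by simp
      define mu where "mu = sqrt (xi^2/(xi-3))"
      have m2: "mu^2 = xi^2/(xi-3)" unfolding mu_def using x3 by simp
      have "lam^2 \<le> xi^2/(xi-3)" using le x3 by (simp add: le_divide_eq)
      hence "lam \<le> mu" unfolding mu_def by (rule real_le_rsqrt)
      hence "lambda_c eps < mu" using lc by simp
      note K2 = keyL2[OF e1 this]
      have "U mu (xi_max mu) > eps^2" using K2(5) U_at_max[OF K2(2)] by simp
      hence E: "(1 - 2/xi)*(1 + 1/(xi-3)) > eps^2" using U_mu[OF x3 x6 m2] by simp
      show False
      proof (cases "xi < 4")
        case True
        thus False using eps_min_mid[OF e1 x3 True] em E by simp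
      next
        case False
        have "eps^2 > 1" using e1 by (simp add: one_less_power)
        thus False using E_le1[of xi] False E by simp
      qed
    qed
  qed
  show ?thesis unfolding case_II_def using e1 lc xm Ul by simp
qed

theorem lemma4:
  fixes xi :: real
  assumes "xi > 2"
  shows "{(eps, lam). eps > 1 \<and> case_II eps lam xi}
       = {(eps, lam). eps > 1 \<and> ereal eps > eps_min xi
                       \<and> lambda_c eps < lam \<and> lam < lambda_max eps xi}"
proof (rule set_eqI)
  fix p :: "real \<times> real"
  obtain eps lam where p: "p = (eps, lam)" by (cases p)
  have c: "case_II eps lam xi \<Longrightarrow> lambda_c eps < lam" by (simp add: case_II_def)
  show "p \<in> {(eps, lam). eps > 1 \<and> case_II eps lam xi} \<longleftrightarrow>
        p \<in> {(eps, lam). eps > 1 \<and> ereal eps > eps_min xi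
                       \<and> lambda_c eps < lam \<and> lam < lambda_max eps xi}"
    unfolding p using dir1[OF assms, of eps lam] dir2[OF assms, of eps lam] c
    by blast
qed

end
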